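(* In the setting below, let $p,q\in X$ with $S_p\cup S_q=E$ and $|S_p\cap S_q|=n-1$, and let $r\in X$ with $S_r\ne S_p$, $S_r\ne S_q$ and $|S_r|\ge 2$. Then either $S_r\subseteq S_p\cap S_q$ or $S_r=(S_p\setminus S_q)\cup(S_q\setminus S_p)$.
   Context: Setting: $E=\{e_0,\dots,e_n\}\subset\mathbb R^n$ is the vertex set of an $n$-simplex with $e_0+\cdots+e_n=0$, and $X\subset\mathbb R^n\setminus\{0\}$ is a finite set with $E\subseteq X$, no element of $X$ a positive multiple of another, such that every $n+1$ points of $X$ are in good position. (A finite set $A$ is in conical position if $0\notin\operatorname{conv}A$ and no point of $A$ lies in the positive hull—set of nonnegative linear combinations—of the other points; it is in good position otherwise.) For $p\in X$, the support $S_p$ is the minimal subset of $E$ whose positive hull contains $p$. *)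

theory Defs
  imports "HOL-Analysis.Analysis"
begin

definition pos_hull :: "'a::real_vector set \<Rightarrow> 'a set" where
  "pos_hull A = {y. \<exists>c. (\<forall>a\<in>A. 0 \<le> c a) \<and> y = (\<Sum>a\<in>A. c a *\<^sub>R a)}"

definition conical_position :: "'a::real_vector set \<Rightarrow> bool" where
  "conical_position A \<longleftrightarrow> 0 \<notin> convex hull A \<and> (\<forall>a\<in>A. a \<notin> pos_hull (A - {a}))"

definition good_position :: "'a::real_vector set \<Rightarrow> bool" where
  "good_position A \<longleftrightarrow> \<not> conical_position A"

definition support :: "'a::real_vector set \<Rightarrow> 'a \<Rightarrow> 'a set" where
  "support E p = (THE S. S \<subseteq> E \<and> p \<in> pos_hull S \<and> (\<forall>T. T \<subset> S \<longrightarrow> p \<notin> pos_hull T))"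

end

theory Submission
  imports Defs
begin

locale splx =
  fixes E :: "'a::real_vector set"
  assumes finE: "finite E"
    and spanE: "\<And>v. \<exists>c. v = (\<Sum>e\<in>E. c e *\<^sub>R e)"
    and relE: "\<And>u e e'. (\<Sum>e\<in>E. u e *\<^sub>R e) = 0 \<Longrightarrow> e\<in>E \<Longrightarrow> e'\<in>E \<Longrightarrow> u e = u e'"
    and sumE: "(\<Sum>e\<in>E. e) = 0"
    and cardE: "card E \<ge> 2"
begin

definition coef where "coef v = (SOME c. v = (\<Sum>e\<in>E. c e *\<^sub>R e))"
definition cf where "cf v e = coef v e - Min (coef v ` E)"

lemma coef: "v = (\<Sum>e\<in>E. coef v e *\<^sub>R e)"
  unfolding coef_def by (rule someI_ex[OF spanE])

lemma Ene: "E \<noteq> {}" using cardE by auto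

lemma cf_repr: "v = (\<Sum>e\<in>E. cf v e *\<^sub>R e)"
proof -
  have "(\<Sum>e\<in>E. cf v e *\<^sub>R e) = (\<Sum>e\<in>E. coef v e *\<^sub>R e) - (\<Sum>e\<in>E. Min (coef v ` E) *\<^sub>R e)"
    by (simp add: cf_def scaleR_diff_left sum_subtractf)
  also have "(\<Sum>e\<in>E. Min (coef v ` E) *\<^sub>R e) = 0"
    by (simp add: scaleR_sum_right[symmetric] sumE)
  finally show ?thesis using coef[of v] by simp
qed

lemma cf_nonneg: "e\<in>E \<Longrightarrow> 0 \<le> cf v e"
  by (simp add: cf_def finE)

lemma cf_zero: "\<exists>e\<in>E. cf v e = 0"
proof -
  have "Min (coef v ` E) \<in> coef v ` E" using Min_in[of "coef v ` E"] finE Ene by auto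
  then obtain e where "e \<in> E" "coef v e = Min (coef v ` E)" by auto
  thus ?thesis by (auto simp: cf_def)
qed

lemma cf_zero_iff: "e\<in>E \<Longrightarrow> \<not> 0 < cf v e \<Longrightarrow> cf v e = 0"
  using cf_nonneg[of e v] by linarith

lemma cf_diff_const:
  assumes "v = (\<Sum>e\<in>E. d e *\<^sub>R e)" "e\<in>E" "e'\<in>E"
  shows "cf v e - d e = cf v e' - d e'"
proof -
  have "(\<Sum>e\<in>E. (cf v e - d e) *\<^sub>R e) = 0"
    using cf_repr[of v] assms(1) by (simp add: scaleR_diff_left sum_subtractf)
  then show ?thesis using relE[of "\<lambda>e. cf v e - d e"] assms by blast
qed

lemma cf_unique:
  assumes "v = (\<Sum>e\<in>E. d e *\<^sub>R e)" "\<forall>e\<in>E. 0 \<le> d e" "e0\<in>E" "d e0 = 0" "e\<in>E"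
  shows "cf v e = d e"
proof -
  obtain e1 where e1: "e1\<in>E" "cf v e1 = 0" using cf_zero by blast
  have a: "cf v e - d e = cf v e0 - d e0" using cf_diff_const assms by blast
  have b: "cf v e - d e = cf v e1 - d e1" using cf_diff_const assms e1 by blast
  have "cf v e0 \<ge> 0" using cf_nonneg assms by blast
  moreover have "d e1 \<ge> 0" using assms e1 by blast
  ultimately show ?thesis using a b assms e1 by linarith
qed

lemma pos_hull_support:
  assumes "T \<subseteq> E" "v \<in> pos_hull T"
  shows "{e\<in>E. cf v e > 0} \<subseteq> T"
proof
  from assms obtain c where c: "\<forall>a\<in>T. 0 \<le> c a" "v = (\<Sum>a\<in>T. c a *\<^sub>R a)"
    by (auto simp: pos_hull_def)
  define d where "d e = (if e \<in> T then c e else 0)" for e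
  have fT: "finite T" using assms finE finite_subset by blast
  have "(\<Sum>e\<in>E. d e *\<^sub>R e) = (\<Sum>e\<in>T. d e *\<^sub>R e)"
    by (rule sum.mono_neutral_right) (use finE assms in \<open>auto simp: d_def\<close>)
  also have "\<dots> = v" using c by (simp add: d_def)
  finally have v: "v = (\<Sum>e\<in>E. d e *\<^sub>R e)" by simp
  obtain e1 where e1: "e1\<in>E" "cf v e1 = 0" using cf_zero by blast
  fix e assume "e \<in> {e\<in>E. cf v e > 0}"
  hence e: "e\<in>E" "cf v e > 0" by auto
  have "cf v e - d e = cf v e1 - d e1" using cf_diff_const[OF v] e e1 by blast
  moreover have "d e1 \<ge> 0" using c by (simp add: d_def)
  ultimately have "d e > 0" using e e1 by linarith
  thus "e \<in> T" by (simp add: d_def split: if_splits)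
qed

lemma in_pos_hull: "v \<in> pos_hull {e\<in>E. cf v e > 0}"
proof -
  have "(\<Sum>e\<in>{e\<in>E. cf v e > 0}. cf v e *\<^sub>R e) = (\<Sum>e\<in>E. cf v e *\<^sub>R e)"
    by (rule sum.mono_neutral_left) (use finE cf_zero_iff in \<open>auto\<close>)
  then show ?thesis unfolding pos_hull_def using cf_repr[of v]
    by (auto intro!: exI[of _ "cf v"] less_imp_le)
qed

lemma support_eq: "support E v = {e\<in>E. cf v e > 0}"
  unfolding support_def
proof (rule the_equality)
  show "{e\<in>E. cf v e > 0} \<subseteq> E \<and> v \<in> pos_hull {e\<in>E. cf v e > 0} \<and>
    (\<forall>T. T \<subset> {e\<in>E. cf v e > 0} \<longrightarrow> v \<notin> pos_hull T)"
    using in_pos_hull pos_hull_support by blast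
next
  fix S assume S: "S \<subseteq> E \<and> v \<in> pos_hull S \<and> (\<forall>T. T \<subset> S \<longrightarrow> v \<notin> pos_hull T)"
  hence "{e\<in>E. cf v e > 0} \<subseteq> S" using pos_hull_support by blast
  thus "S = {e\<in>E. cf v e > 0}" using S in_pos_hull by blast
qed

lemma cf_E: assumes "x\<in>E" "e\<in>E" shows "cf x e = (if e = x then 1 else 0)"
proof -
  obtain e0 where e0: "e0\<in>E" "e0 \<noteq> x"
  proof -
    have "card (E - {x}) = card E - 1" using assms finE by simp
    hence "card (E - {x}) \<noteq> 0" using cardE by linarith
    hence "E - {x} \<noteq> {}" by (metis card.empty)
    thus ?thesis using that by blast
  qed
  have "x = (\<Sum>e\<in>E. (if e = x then 1 else 0) *\<^sub>R e)"
    using assms finE by (simp add: if_distrib[of "\<lambda>c. c *\<^sub>R _"] sum.delta' cong: if_cong)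
  then show ?thesis by (rule cf_unique) (use e0 assms in auto)
qed

lemma supp_E: "x\<in>E \<Longrightarrow> {e\<in>E. cf x e > 0} = {x}"
  using cf_E by (auto split: if_splits)

lemma card_supp: "card {e\<in>E. cf v e > 0} \<le> card E - 1"
proof -
  obtain e1 where e1: "e1\<in>E" "cf v e1 = 0" using cf_zero by blast
  have "{e\<in>E. cf v e > 0} \<subseteq> E - {e1}" using e1 by auto
  hence "card {e\<in>E. cf v e > 0} \<le> card (E - {e1})" by (intro card_mono) (use finE in auto)
  also have "\<dots> = card E - 1" using e1 finE by simp
  finally show ?thesis .
qed

lemma supp_ne_E: "{e\<in>E. cf v e > 0} \<noteq> E"
proof
  assume "{e\<in>E. cf v e > 0} = E"
  then show False using cf_zero[of v] by (metis (no_types, lifting) less_irrefl mem_Collect_eq)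
qed


lemma rel_coef:
  assumes "finite A" "(\<Sum>x\<in>A. \<nu> x *\<^sub>R x) = 0" "e\<in>E" "e'\<in>E"
  shows "(\<Sum>x\<in>A. \<nu> x * cf x e) = (\<Sum>x\<in>A. \<nu> x * cf x e')"
proof -
  have "(\<Sum>x\<in>A. \<nu> x *\<^sub>R x) = (\<Sum>x\<in>A. \<nu> x *\<^sub>R (\<Sum>e\<in>E. cf x e *\<^sub>R e))"
    by (subst cf_repr[symmetric]) simp
  also have "\<dots> = (\<Sum>x\<in>A. \<Sum>e\<in>E. (\<nu> x * cf x e) *\<^sub>R e)"
    by (simp add: scaleR_sum_right)
  also have "\<dots> = (\<Sum>e\<in>E. \<Sum>x\<in>A. (\<nu> x * cf x e) *\<^sub>R e)"
    by (rule sum.swap)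
  also have "\<dots> = (\<Sum>e\<in>E. (\<Sum>x\<in>A. \<nu> x * cf x e) *\<^sub>R e)"
    by (simp add: scaleR_sum_left)
  finally have "(\<Sum>e\<in>E. (\<Sum>x\<in>A. \<nu> x * cf x e) *\<^sub>R e) = 0" using assms(2) by simp
  then show ?thesis using relE[of "\<lambda>e. \<Sum>x\<in>A. \<nu> x * cf x e"] assms(3,4) by blast
qed

lemma conical_coef:
  assumes fin: "finite A"
    and uniq: "\<And>\<nu>. (\<forall>e\<in>E. \<forall>e'\<in>E. (\<Sum>x\<in>A. \<nu> x * cf x e) = (\<Sum>x\<in>A. \<nu> x * cf x e'))
                   \<Longrightarrow> \<exists>t. \<forall>x\<in>A. \<nu> x = t * \<mu> x"
    and xa2: "xa\<in>A" "xb\<in>A" "xa\<noteq>xb" "\<mu> xa > 0" "\<mu> xb > 0"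
    and ya2: "ya\<in>A" "yb\<in>A" "ya\<noteq>yb" "\<mu> ya < 0" "\<mu> yb < 0"
  shows "conical_position A"
  unfolding conical_position_def
proof (intro conjI ballI notI)
  assume "0 \<in> convex hull A"
  then obtain u where u: "\<forall>x\<in>A. 0 \<le> u x" "sum u A = 1" "(\<Sum>x\<in>A. u x *\<^sub>R x) = 0"
    using convex_hull_finite[OF fin] by auto
  obtain t where t: "\<forall>x\<in>A. u x = t * \<mu> x"
    using uniq[of u] rel_coef[OF fin u(3)] by blast
  have "t * \<mu> xa \<ge> 0" using t u xa2 by metis
  hence "t \<ge> 0" using xa2 by (simp add: zero_le_mult_iff)
  have "t * \<mu> ya \<ge> 0" using t u ya2 by metis
  hence "t \<le> 0" using ya2 by (simp add: zero_le_mult_iff)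
  have "t = 0" using \<open>t \<ge> 0\<close> \<open>t \<le> 0\<close> by simp
  hence "sum u A = 0" using t by simp
  thus False using u by simp
next
  fix a assume a: "a \<in> A" "a \<in> pos_hull (A - {a})"
  then obtain d where d: "\<forall>x\<in>A-{a}. 0 \<le> d x" "a = (\<Sum>x\<in>A-{a}. d x *\<^sub>R x)"
    by (auto simp: pos_hull_def)
  define \<nu> where "\<nu> x = (if x = a then -1 else d x)" for x
  have "(\<Sum>x\<in>A. \<nu> x *\<^sub>R x) = \<nu> a *\<^sub>R a + (\<Sum>x\<in>A-{a}. \<nu> x *\<^sub>R x)"
    using fin a(1) by (simp add: sum.remove)
  also have "(\<Sum>x\<in>A-{a}. \<nu> x *\<^sub>R x) = (\<Sum>x\<in>A-{a}. d x *\<^sub>R x)"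
    by (rule sum.cong) (auto simp: \<nu>_def)
  finally have rel: "(\<Sum>x\<in>A. \<nu> x *\<^sub>R x) = 0" using d by (simp add: \<nu>_def)
  obtain t where t: "\<forall>x\<in>A. \<nu> x = t * \<mu> x"
    using uniq[of \<nu>] rel_coef[OF fin rel] by blast
  have ta: "t * \<mu> a = -1" using t a(1) unfolding \<nu>_def by (metis (full_types))
  have nn: "\<And>x. x\<in>A \<Longrightarrow> x \<noteq> a \<Longrightarrow> t * \<mu> x \<ge> 0" using t d by (metis DiffI \<nu>_def singletonD)
  consider "\<mu> a > 0" | "\<mu> a < 0" | "\<mu> a = 0" by linarith
  then show False
  proof cases
    case 1
    hence "t < 0" using ta by (smt (verit) mult_nonneg_nonneg)
    obtain x where "x \<in> A" "x \<noteq> a" "\<mu> x > 0" using xa2 by metis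
    thus False using nn[of x] \<open>t < 0\<close> by (smt (verit) mult_neg_pos)
  next
    case 2
    hence "t > 0" using ta by (smt (verit) mult_nonpos_nonpos)
    obtain x where "x \<in> A" "x \<noteq> a" "\<mu> x < 0" using ya2 by metis
    thus False using nn[of x] \<open>t > 0\<close> by (smt (verit) mult_pos_neg)
  next
    case 3 thus False using ta by simp
  qed
qed

lemma sum_E_part:
  assumes "B \<subseteq> E" "e \<in> E"
  shows "(\<Sum>x\<in>B. \<nu> x * cf x e) = (if e \<in> B then \<nu> e else 0)"
proof -
  have fB: "finite B" using assms finE finite_subset by blast
  have "(\<Sum>x\<in>B. \<nu> x * cf x e) = (\<Sum>x\<in>B. if x = e then \<nu> x else 0)"
    by (rule sum.cong) (use assms cf_E in auto)
  also have "\<dots> = (if e \<in> B then \<nu> e else 0)" using fB by (simp add: sum.delta')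
  finally show ?thesis .
qed


lemma swap_bad:
  assumes good: "\<And>A. A \<subseteq> X \<Longrightarrow> card A = card E \<Longrightarrow> \<not> conical_position A"
   and EX: "E \<subseteq> X" and uw: "u\<in>X" "w\<in>X" "u\<notin>E" "w\<notin>E" "u\<noteq>w"
   and a12: "a1\<in>E" "a2\<in>E" "a1\<noteq>a2"
   and cu: "cf u a1 = 0" "cf u a2 > 0" and cw: "cf w a1 > 0" "cf w a2 = 0"
   and e12: "e1\<in>E" "e2\<in>E" "e1\<noteq>e2" "e1\<noteq>a1" "e1\<noteq>a2" "e2\<noteq>a1" "e2\<noteq>a2"
   and neg: "cf u a2 * cf w a1 - cf u e1 * cf w a1 - cf w e1 * cf u a2 < 0"
            "cf u a2 * cf w a1 - cf u e2 * cf w a1 - cf w e2 * cf u a2 < 0"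
  shows False
proof -
  define B where "B = E - {a1,a2}"
  define A where "A = insert u (insert w B)"
  have BE: "B \<subseteq> E" by (auto simp: B_def)
  have finB: "finite B" using finE by (simp add: B_def)
  have uB: "u \<notin> B" "w \<notin> B" using uw by (auto simp: B_def)
  have cardA: "card A = card E"
  proof -
    have "card B = card E - card {a1,a2}" unfolding B_def
      by (rule card_Diff_subset) (use a12 in auto)
    hence "card B = card E - 2" using a12 by simp
    moreover have "card E \<ge> 2" by (rule cardE)
    ultimately show ?thesis using uB uw finB by (simp add: A_def)
  qed
  have AX: "A \<subseteq> X" using EX uw by (auto simp: A_def B_def)
  define \<mu> where "\<mu> x = (if x = u then cf w a1 else if x = w then cf u a2
      else cf u a2 * cf w a1 - cf u x * cf w a1 - cf w x * cf u a2)" for x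
  have "conical_position A"
  proof (rule conical_coef[where \<mu>=\<mu> and xa=u and xb=w and ya=e1 and yb=e2])
    show "finite A" using finB by (simp add: A_def)
    show "u \<in> A" "w \<in> A" "u \<noteq> w" "\<mu> u > 0" "\<mu> w > 0"
      using uw cu cw by (auto simp: A_def \<mu>_def)
    show "e1 \<in> A" "e2 \<in> A" "e1 \<noteq> e2" "\<mu> e1 < 0" "\<mu> e2 < 0"
      using e12 neg uw by (auto simp: A_def B_def \<mu>_def)
  next
    fix \<nu> assume H: "\<forall>e\<in>E. \<forall>e'\<in>E. (\<Sum>x\<in>A. \<nu> x * cf x e) = (\<Sum>x\<in>A. \<nu> x * cf x e')"
    have S: "(\<Sum>x\<in>A. \<nu> x * cf x e) = \<nu> u * cf u e + \<nu> w * cf w e + (if e \<in> B then \<nu> e else 0)"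
      if "e\<in>E" for e
      using uB uw finB sum_E_part[OF BE that, of \<nu>] by (simp add: A_def)
    define K where "K = (\<Sum>x\<in>A. \<nu> x * cf x a1)"
    have a1B: "a1 \<notin> B" "a2 \<notin> B" by (auto simp: B_def)
    have k1: "\<nu> w * cf w a1 = K" using S[of a1] a12 cu a1B by (simp add: K_def)
    have HK: "(\<Sum>x\<in>A. \<nu> x * cf x e) = K" if "e\<in>E" for e
      using H a12 that unfolding K_def by blast
    have k2: "\<nu> u * cf u a2 = K" using S[of a2] a12 cw a1B HK[of a2] by simp
    have k3: "\<nu> e = K - \<nu> u * cf u e - \<nu> w * cf w e" if "e \<in> B" for e
      using S[of e] that BE HK[of e] by auto
    define t where "t = K / (cf u a2 * cf w a1)"
    have nz: "cf u a2 \<noteq> 0" "cf w a1 \<noteq> 0" using cu cw by auto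
    have tu: "\<nu> u = t * cf w a1" using k2 nz by (simp add: t_def field_simps)
    have tw: "\<nu> w = t * cf u a2" using k1 nz by (simp add: t_def field_simps)
    show "\<exists>t. \<forall>x\<in>A. \<nu> x = t * \<mu> x"
    proof (intro exI ballI)
      fix x assume "x \<in> A"
      then consider "x = u" | "x = w" | "x \<in> B" "x \<noteq> u" "x \<noteq> w" using uB by (auto simp: A_def)
      then show "\<nu> x = t * \<mu> x"
      proof cases
        case 1 thus ?thesis using tu by (simp add: \<mu>_def)
      next
        case 2 thus ?thesis using tw uw by (simp add: \<mu>_def)
      next
        case 3
        have "\<nu> x = K - \<nu> u * cf u x - \<nu> w * cf w x" using k3 3 by blast
        also have "K = t * (cf u a2 * cf w a1)" using nz by (simp add: t_def)
        finally show ?thesis using 3 tu tw by (simp add: \<mu>_def algebra_simps)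
      qed
    qed
  qed
  thus False using good AX cardA by blast
qed

lemma one_bad:
  assumes good: "\<And>A. A \<subseteq> X \<Longrightarrow> card A = card E \<Longrightarrow> \<not> conical_position A"
   and EX: "E \<subseteq> X" and u: "u\<in>X" "u\<notin>E"
   and x: "x\<in>E" and e0: "e0\<in>E" "cf u e0 < cf u x"
   and e12: "e1\<in>E" "e2\<in>E" "e1\<noteq>e2" "cf u e1 > cf u x" "cf u e2 > cf u x"
  shows False
proof -
  define B where "B = E - {x}"
  define A where "A = insert u B"
  have BE: "B \<subseteq> E" by (auto simp: B_def)
  have finB: "finite B" using finE by (simp add: B_def)
  have uB: "u \<notin> B" using u by (auto simp: B_def)
  have cardA: "card A = card E"
  proof -
    have "card B = card E - 1" unfolding B_def using x finE by simp
    moreover have "card E \<ge> 2" by (rule cardE)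
    ultimately show ?thesis using uB finB by (simp add: A_def)
  qed
  have AX: "A \<subseteq> X" using EX u by (auto simp: A_def B_def)
  define \<mu> where "\<mu> y = (if y = u then 1 else cf u x - cf u y)" for y
  have "conical_position A"
  proof (rule conical_coef[where \<mu>=\<mu> and xa=u and xb=e0 and ya=e1 and yb=e2])
    show "finite A" using finB by (simp add: A_def)
    show "u \<in> A" "e0 \<in> A" "u \<noteq> e0" "\<mu> u > 0" "\<mu> e0 > 0"
      using u e0 by (auto simp: A_def B_def \<mu>_def)
    show "e1 \<in> A" "e2 \<in> A" "e1 \<noteq> e2" "\<mu> e1 < 0" "\<mu> e2 < 0"
      using e12 u by (auto simp: A_def B_def \<mu>_def)
  next
    fix \<nu> assume H: "\<forall>e\<in>E. \<forall>e'\<in>E. (\<Sum>y\<in>A. \<nu> y * cf y e) = (\<Sum>y\<in>A. \<nu> y * cf y e')"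
    have S: "(\<Sum>y\<in>A. \<nu> y * cf y e) = \<nu> u * cf u e + (if e \<in> B then \<nu> e else 0)"
      if "e\<in>E" for e
      using uB finB sum_E_part[OF BE that, of \<nu>] by (simp add: A_def)
    define K where "K = (\<Sum>y\<in>A. \<nu> y * cf y x)"
    have xB: "x \<notin> B" by (auto simp: B_def)
    have k1: "\<nu> u * cf u x = K" using S[of x] x xB by (simp add: K_def)
    have HK: "(\<Sum>y\<in>A. \<nu> y * cf y e) = K" if "e\<in>E" for e
      using H x that unfolding K_def by blast
    have k3: "\<nu> e = K - \<nu> u * cf u e" if "e \<in> B" for e
      using S[of e] that BE HK[of e] by auto
    show "\<exists>t. \<forall>y\<in>A. \<nu> y = t * \<mu> y"
    proof (intro exI ballI)
      fix y assume "y \<in> A"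
      then consider "y = u" | "y \<in> B" "y \<noteq> u" using uB by (auto simp: A_def)
      then show "\<nu> y = \<nu> u * \<mu> y"
      proof cases
        case 1 thus ?thesis by (simp add: \<mu>_def)
      next
        case 2 thus ?thesis using k3[of y] k1 by (simp add: \<mu>_def algebra_simps)
      qed
    qed
  qed
  thus False using good AX cardA by blast
qed


lemma half:
  assumes good: "\<And>A. A \<subseteq> X \<Longrightarrow> card A = card E \<Longrightarrow> \<not> conical_position A"
   and EX: "E \<subseteq> X" and pqr: "p\<in>X" "q\<in>X" "r\<in>X"
   and ab: "a\<in>E" "b\<in>E" "a\<noteq>b"
   and Sp: "{e\<in>E. cf p e > 0} = E - {a}" and Sq: "{e\<in>E. cf q e > 0} = E - {b}"
   and ar: "a \<in> {e\<in>E. cf r e > 0}" and rq: "{e\<in>E. cf r e > 0} \<noteq> E - {b}"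
   and rab: "{e\<in>E. cf r e > 0} \<noteq> {a,b}" and r2: "card {e\<in>E. cf r e > 0} \<ge> 2"
  shows False
proof -
  define Sr where "Sr = {e\<in>E. cf r e > 0}"
  have SrE: "Sr \<subseteq> E" by (auto simp: Sr_def)
  have aSr: "a \<in> Sr" using ar by (simp add: Sr_def)
  obtain h where h: "h \<in> Sr" "h \<noteq> a" "h \<noteq> b"
  proof (cases "b \<in> Sr")
    case True
    have "Sr \<noteq> {a,b}" using rab by (simp add: Sr_def)
    hence "\<exists>h\<in>Sr. h \<noteq> a \<and> h \<noteq> b" using True aSr by blast
    thus ?thesis using that by blast
  next
    case False
    have "\<exists>h\<in>Sr. h \<noteq> a"
    proof (rule ccontr)
      assume "\<not> ?thesis"
      hence "Sr \<subseteq> {a}" by blast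
      hence "card Sr \<le> card {a}" by (intro card_mono) auto
      hence "card Sr \<le> 1" by simp
      thus False using r2 by (simp add: Sr_def)
    qed
    thus ?thesis using that False by blast
  qed
  obtain g where g: "g \<in> E" "g \<notin> Sr" "g \<noteq> a" "g \<noteq> b"
  proof (cases "b \<in> Sr")
    case True
    have "Sr \<noteq> E" using supp_ne_E by (simp add: Sr_def)
    then obtain g where "g \<in> E" "g \<notin> Sr" using SrE by blast
    thus ?thesis using that True aSr by blast
  next
    case False
    hence "Sr \<subseteq> E - {b}" using SrE by blast
    moreover have "Sr \<noteq> E - {b}" using rq by (simp add: Sr_def)
    ultimately obtain g where "g \<in> E" "g \<noteq> b" "g \<notin> Sr" by blast
    thus ?thesis using that aSr by blast
  qed
  have hE: "h \<in> E" using h SrE by blast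
  have gh: "g \<noteq> h" using g h by blast
  have pa: "cf p a = 0" using Sp ab cf_zero_iff[of a p] by blast
  have pE: "\<And>e. e \<in> E \<Longrightarrow> e \<noteq> a \<Longrightarrow> cf p e > 0" using Sp by blast
  have qb: "cf q b = 0" using Sq ab cf_zero_iff[of b q] by blast
  have qE: "\<And>e. e \<in> E \<Longrightarrow> e \<noteq> b \<Longrightarrow> cf q e > 0" using Sq by blast
  have rg: "cf r g = 0" using g cf_zero_iff[of g r] by (simp add: Sr_def)
  have ra: "cf r a > 0" using aSr by (simp add: Sr_def)
  have rh: "cf r h > 0" using h by (simp add: Sr_def)
  have rnn: "\<And>e. e\<in>E \<Longrightarrow> cf r e \<ge> 0" by (rule cf_nonneg)
  have pnE: "p \<notin> E"
  proof
    assume "p \<in> E"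
    hence "E - {a} = {p}" using supp_E Sp by simp
    moreover have "g \<in> E - {a}" "h \<in> E - {a}" using g hE h by auto
    ultimately show False using gh by simp
  qed
  have qnE: "q \<notin> E"
  proof
    assume "q \<in> E"
    hence "E - {b} = {q}" using supp_E Sq by simp
    moreover have "g \<in> E - {b}" "h \<in> E - {b}" using g hE h by auto
    ultimately show False using gh by simp
  qed
  have rnE: "r \<notin> E"
  proof
    assume "r \<in> E"
    hence "Sr = {r}" using supp_E by (simp add: Sr_def)
    thus False using r2 by (simp add: Sr_def)
  qed
  have pq: "p \<noteq> q" using pa qE[of a] ab by auto
  have pr: "p \<noteq> r" using pa ra by auto
  define D where "D = E - {a}"
  have finD: "finite D" "D \<noteq> {}" using finE g by (auto simp: D_def)
  define m where "m = Min (cf p ` D)"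
  have "m \<in> cf p ` D" unfolding m_def using Min_in[of "cf p ` D"] finD by blast
  then obtain x where x: "x \<in> D" "cf p x = m" by auto
  have mle: "\<And>y. y \<in> D \<Longrightarrow> m \<le> cf p y" using finD by (simp add: m_def)
  have xE: "x \<in> E" "x \<noteq> a" using x by (auto simp: D_def)
  have I1: "\<not> (cf p e1 > m \<and> cf p e2 > m)" if "e1 \<in> E" "e2 \<in> E" "e1 \<noteq> e2" for e1 e2
  proof
    assume "cf p e1 > m \<and> cf p e2 > m"
    thus False using one_bad[OF good EX pqr(1) pnE xE(1) ab(1), of e1 e2] pa pE[OF xE] x that
      by auto
  qed
  have bm: "cf p b > m"
  proof (rule ccontr)
    assume "\<not> cf p b > m"
    hence pbm: "cf p b \<le> m" by simp
    have gD: "g \<in> D" and hD: "h \<in> D" using g hE h by (auto simp: D_def)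
    have pb: "cf p b > 0" "cf q a > 0" using pE qE ab by auto
    have n1: "cf p b * cf q a - cf p g * cf q a - cf q g * cf p b < 0"
    proof -
      have "(cf p b - cf p g) * cf q a \<le> 0"
        using pbm mle[OF gD] pb by (intro mult_nonpos_nonneg) auto
      moreover have "cf q g * cf p b > 0" using qE[of g] g pb by simp
      ultimately show ?thesis by (simp add: algebra_simps)
    qed
    have n2: "cf p b * cf q a - cf p h * cf q a - cf q h * cf p b < 0"
    proof -
      have "(cf p b - cf p h) * cf q a \<le> 0"
        using pbm mle[OF hD] pb by (intro mult_nonpos_nonneg) auto
      moreover have "cf q h * cf p b > 0" using qE[of h] hE h pb by simp
      ultimately show ?thesis by (simp add: algebra_simps)
    qed
    show False
      by (rule swap_bad[OF good EX pqr(1,2) pnE qnE pq ab pa pE[OF ab(2) ab(3)[symmetric]]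
            qE[OF ab(1,3)] qb g(1) hE gh g(3,4) h(2,3) n1 n2])
  qed
  have pg: "cf p g = m"
    using I1[of g b] g ab bm mle[of g] by (force simp: D_def)
  have ph: "cf p h = m"
    using I1[of h b] hE h ab bm mle[of h] by (force simp: D_def)
  have n1: "cf p g * cf r a - cf p b * cf r a - cf r b * cf p g < 0"
  proof -
    have "(cf p g - cf p b) * cf r a < 0" using pg bm ra by (simp add: mult_neg_pos)
    moreover have "cf r b * cf p g \<ge> 0" using rnn[of b] ab pE[of g] g by simp
    ultimately show ?thesis by (simp add: algebra_simps)
  qed
  have n2: "cf p g * cf r a - cf p h * cf r a - cf r h * cf p g < 0"
    using pg ph rh pE[of g] g by simp
  show False
    by (rule swap_bad[OF good EX pqr(1,3) pnE rnE pr ab(1) g(1) g(3)[symmetric] pa pE[OF g(1,3)]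
          ra rg ab(2) hE h(3)[symmetric] _ g(4)[symmetric] h(2) gh[symmetric] n1 n2]) (use ab in auto)
qed

end

theorem proposition6p9:
  fixes E X :: "(real ^ 'n) set" and p q r :: "real ^ 'n"
  assumes E_card: "card E = CARD('n) + 1"
    and E_simplex: "\<not> affine_dependent E"
    and E_sum: "(\<Sum>e\<in>E. e) = 0"
    and X_fin: "finite X"
    and X_nz: "0 \<notin> X"
    and E_X: "E \<subseteq> X"
    and X_nomult: "\<forall>x\<in>X. \<forall>y\<in>X. \<forall>c::real. c > 0 \<and> x = c *\<^sub>R y \<longrightarrow> x = y"
    and X_good: "\<forall>A. A \<subseteq> X \<and> card A = CARD('n) + 1 \<longrightarrow> good_position A"
    and pq: "p \<in> X" "q \<in> X"
    and union: "support E p \<union> support E q = E"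
    and inter: "card (support E p \<inter> support E q) = CARD('n) - 1"
    and r: "r \<in> X"
    and rp: "support E r \<noteq> support E p"
    and rq: "support E r \<noteq> support E q"
    and r2: "card (support E r) \<ge> 2"
  shows "support E r \<subseteq> support E p \<inter> support E q \<or>
         support E r = (support E p - support E q) \<union> (support E q - support E p)"
proof -
  have n1: "CARD('n) \<ge> 1" by (simp add: Suc_leI)
  have finE: "finite E" using E_card by (metis card.infinite nat.distinct(1) add_is_0 one_neq_zero)
  have spanE: "\<exists>c. v = (\<Sum>e\<in>E. c e *\<^sub>R e)" for v
  proof -
    have "of_nat (card E) = aff_dim E + 1" by (rule aff_dim_affine_independent[OF E_simplex])
    hence "aff_dim E = int CARD('n)" using E_card by simp
    hence "aff_dim E = DIM(real ^ 'n)" by simp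
    hence "affine hull E = UNIV" by (simp only: aff_dim_eq_full)
    hence "v \<in> affine hull E" by simp
    then obtain u where "sum u E = 1" "(\<Sum>e\<in>E. u e *\<^sub>R e) = v"
      using affine_hull_finite[OF finE] by auto
    thus ?thesis by metis
  qed
  have relE: "u e = u e'" if H: "(\<Sum>e\<in>E. u e *\<^sub>R e) = 0" "e\<in>E" "e'\<in>E" for u e e'
  proof -
    define M where "M = sum u E / real (card E)"
    define w where "w x = u x - M" for x
    have cE: "real (card E) \<noteq> 0" using E_card by simp
    have "sum w E = sum u E - real (card E) * M" by (simp add: w_def sum_subtractf)
    hence sw: "sum w E = 0" using cE by (simp add: M_def)
    have "(\<Sum>x\<in>E. w x *\<^sub>R x) = (\<Sum>x\<in>E. u x *\<^sub>R x) - M *\<^sub>R (\<Sum>x\<in>E. x)"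
      by (simp add: w_def scaleR_diff_left sum_subtractf scaleR_sum_right)
    hence "(\<Sum>x\<in>E. w x *\<^sub>R x) = 0" using H E_sum by simp
    hence "\<forall>v\<in>E. w v = 0" using E_simplex sw affine_dependent_explicit_finite[OF finE] by blast
    thus ?thesis using H by (simp add: w_def)
  qed
  have cardE2: "card E \<ge> 2" using E_card n1 by simp
  interpret splx E
    by unfold_locales (use finE spanE relE E_sum cardE2 in auto)
  have good: "\<not> conical_position A" if "A \<subseteq> X" "card A = card E" for A
    using X_good that E_card by (auto simp: good_position_def)
  define Sp where "Sp = {e\<in>E. cf p e > 0}"
  define Sq where "Sq = {e\<in>E. cf q e > 0}"
  define Sr where "Sr = {e\<in>E. cf r e > 0}"
  have sup: "support E p = Sp" "support E q = Sq" "support E r = Sr"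
    by (simp_all add: support_eq Sp_def Sq_def Sr_def)
  have SE: "Sp \<subseteq> E" "Sq \<subseteq> E" "Sr \<subseteq> E" by (auto simp: Sp_def Sq_def Sr_def)
  have fin: "finite Sp" "finite Sq" using SE finE finite_subset by blast+
  have cp: "card Sp \<le> CARD('n)" "card Sq \<le> CARD('n)"
    using card_supp[of p] card_supp[of q] E_card by (simp_all add: Sp_def Sq_def)
  have "card Sp + card Sq = card (Sp \<union> Sq) + card (Sp \<inter> Sq)" by (rule card_Un_Int[OF fin])
  also have "\<dots> = (CARD('n) + 1) + (CARD('n) - 1)" using union inter E_card sup by simp
  finally have cs: "card Sp = CARD('n)" "card Sq = CARD('n)" using cp n1 by linarith+
  have c1: "card (E - Sp) = 1" "card (E - Sq) = 1"
    using card_Diff_subset[OF fin(1) SE(1)] card_Diff_subset[OF fin(2) SE(2)] cs E_card by simp_all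
  obtain a where a: "E - Sp = {a}" using c1(1) card_1_singletonE by blast
  obtain b where b: "E - Sq = {b}" using c1(2) card_1_singletonE by blast
  have aE: "a \<in> E" "Sp = E - {a}" using a SE by blast+
  have bE: "b \<in> E" "Sq = E - {b}" using b SE by blast+
  have ab: "a \<noteq> b"
  proof
    assume "a = b"
    hence "Sp \<union> Sq = E - {a}" using aE bE by blast
    thus False using union sup aE by blast
  qed
  have I: "Sp \<inter> Sq = E - {a,b}" using aE bE by blast
  have D: "(Sp - Sq) \<union> (Sq - Sp) = {a,b}" using aE bE ab by blast
  have "Sr \<subseteq> Sp \<inter> Sq \<or> Sr = (Sp - Sq) \<union> (Sq - Sp)"
  proof (cases "a \<in> Sr \<or> b \<in> Sr")
    case False thus ?thesis using I SE by blast
  next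
    case True
    show ?thesis
    proof (cases "Sr = {a,b}")
      case True thus ?thesis using D by simp
    next
      case nab: False
      have r2': "card Sr \<ge> 2" using r2 sup by simp
      show ?thesis
      proof (cases "a \<in> Sr")
        case True
        have False
          by (rule half[OF good E_X pq r aE(1) bE(1) ab, folded Sp_def Sq_def Sr_def])
             (use aE bE True rq sup nab r2' in auto)
        thus ?thesis ..
      next
        case False
        hence bSr: "b \<in> Sr" using \<open>a \<in> Sr \<or> b \<in> Sr\<close> by blast
        have nba: "Sr \<noteq> {b,a}" using nab by (simp add: insert_commute)
        have False
          by (rule half[OF good E_X pq(2) pq(1) r bE(1) aE(1) ab[symmetric], folded Sp_def Sq_def Sr_def])
             (use aE bE bSr rp sup nba r2' in auto)
        thus ?thesis ..
      qed
    qed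
  qed
  thus ?thesis using sup by simp
qed

end
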